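(* Let $A,B$ be effect algebras. The category $\beta_{A,B}$ of bimorphisms from $A,B$ is isomorphic to the category of cocones under the diagram $D_{A,B}\colon\int R(A)\times\int R(B)\to\mathbf{EA}$. Under this isomorphism, $C$-valued bimorphisms correspond exactly to cocones with apex $C$. Explicitly, a bimorphism $h$ corresponds to the cocone whose component at $(g_A,g_B)$, with $g_A\colon 2^{[n]}\to A$ and $g_B\colon 2^{[m]}\to B$, is $$X\mapsto \sum_{(i,j)\in X}h\bigl(g_A(\{i\}),g_B(\{j\})\bigr),\qquad X\subseteq[n]\times[m].$$ Conversely, a cocone $(v)$ corresponds to the bimorphism $h(a,b)=v_{\langle a\rangle,\langle b\rangle}(\{(1,1)\})$, where $\langle a\rangle\colon 2^{[2]}\to A$ is the observable with $\{1\}\mapsto a$ and $\{2\}\mapsto a^\perp$.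
   Context: An effect algebra is a partial algebra $(A;+,0,1)$, with a binary partial operation $+$ and constants $0,1$, satisfying: (E1) if $a+b$ is defined, then $b+a$ is defined and $a+b=b+a$; (E2) if $a+b$ and $(a+b)+c$ are defined, then $b+c$ and $a+(b+c)$ are defined and $(a+b)+c=a+(b+c)$; (E3) for every $a$ there is a unique $a^\perp$ such that $a+a^\perp=1$; (E4) if $a+1$ is defined, then $a=0$. One-element effect algebras are allowed. We write $a\perp b$ when $a+b$ is defined. Morphisms of effect algebras preserve $1$ and defined sums; $\mathbf{EA}$ is their category. Boolean algebras are effect algebras via: $x+y$ is defined iff $x\wedge y=0$, and then $x+y=x\vee y$. For $[n]=\{1,\dots,n\}$, $\mathbf{FinBool}$ is the full subcategory of Boolean algebras on the objects $2^{[n]}$, $n\in\mathbb N$. The category $\int R(A)$ has: - objects: pairs $(2^{[n]},g)$ with $g\colon 2^{[n]}\to A$ an effect-algebra morphism; - arrows $(2^{[n]},g)\to(2^{[n']},g')$: Boolean algebra morphisms $f\colon 2^{[n]}\to 2^{[n']}$ with $g'\circ f=g$. The coproduct of Boolean algebras is denoted $*$, and $2^{[n]}*2^{[m]}$ is identified with $2^{[n]\times[m]}$. For morphisms $s\colon 2^{[n]}\to 2^{[n']}$ and $t\colon 2^{[m]}\to 2^{[m']}$, $$(s*t)(X)=\bigcup_{(i,j)\in X}s(\{i\})\times t(\{j\}).$$ $D_{A,B}\colon\int R(A)\times\int R(B)\to\mathbf{EA}$ sends $\bigl((2^{[n]},g_A),(2^{[m]},g_B)\bigr)$ to $2^{[n]}*2^{[m]}$,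 and sends $(f_A,f_B)$ to $f_A*f_B$. A bimorphism from $A,B$ to $C$ is a map $h\colon A\times B\to C$ satisfying: - $h(1,1)=1$; - $a_1\perp a_2$ implies $h(a_1,b)\perp h(a_2,b)$ and $h(a_1+a_2,b)=h(a_1,b)+h(a_2,b)$; - symmetrically in the second argument. $\beta_{A,B}$ is the category whose objects are bimorphisms from $A,B$ (into any $C$), and whose morphisms $h\to h'$ are $\mathbf{EA}$-morphisms $f$ with $f\circ h=h'$. The category of cocones under $D_{A,B}$ has morphisms given by $\mathbf{EA}$-maps between apexes commuting with all components. *)

theory Defs
  imports Main "HOL-Library.Product_Lexorder"
begin

text \<open>An effect algebra is represented by a carrier set, an orthogonality relation
(definedness of the partial sum), a (total HOL) function giving the sum where defined,
and the constants 0 and 1.\<close>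

record 'a effalg =
  carrier :: "'a set"
  orth    :: "'a \<Rightarrow> 'a \<Rightarrow> bool"
  eplus   :: "'a \<Rightarrow> 'a \<Rightarrow> 'a"
  ezero   :: 'a
  eone    :: 'a

definition effect_algebra :: "'a effalg \<Rightarrow> bool" where
  "effect_algebra E \<longleftrightarrow>
     ezero E \<in> carrier E \<and> eone E \<in> carrier E \<and>
     (\<forall>a b. orth E a b \<longrightarrow> a \<in> carrier E \<and> b \<in> carrier E \<and> eplus E a b \<in> carrier E) \<and>
     (\<forall>a b. orth E a b \<longrightarrow> orth E b a \<and> eplus E a b = eplus E b a) \<and>
     (\<forall>a b c. orth E a b \<and> orth E (eplus E a b) c \<longrightarrow>
        orth E b c \<and> orth E a (eplus E b c) \<and>
        eplus E (eplus E a b) c = eplus E a (eplus E b c)) \<and>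
     (\<forall>a\<in>carrier E. \<exists>!b. b \<in> carrier E \<and> orth E a b \<and> eplus E a b = eone E) \<and>
     (\<forall>a. orth E a (eone E) \<longrightarrow> a = ezero E)"

definition ecompl :: "'a effalg \<Rightarrow> 'a \<Rightarrow> 'a" where
  "ecompl E a = (THE b. b \<in> carrier E \<and> orth E a b \<and> eplus E a b = eone E)"

definition ea_morphism :: "'a effalg \<Rightarrow> 'b effalg \<Rightarrow> ('a \<Rightarrow> 'b) \<Rightarrow> bool" where
  "ea_morphism E F f \<longleftrightarrow>
     (\<forall>a\<in>carrier E. f a \<in> carrier F) \<and>
     f (eone E) = eone F \<and>
     (\<forall>a b. orth E a b \<longrightarrow> orth F (f a) (f b) \<and> f (eplus E a b) = eplus F (f a) (f b))"

definition powerset_ea :: "'i set \<Rightarrow> 'i set effalg" where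
  "powerset_ea S = \<lparr> carrier = Pow S, orth = (\<lambda>X Y. X \<subseteq> S \<and> Y \<subseteq> S \<and> X \<inter> Y = {}),
                      eplus = (\<union>), ezero = {}, eone = S \<rparr>"

definition bool_ea :: "nat \<Rightarrow> nat set effalg" where
  "bool_ea n = powerset_ea {1..n}"

text \<open>\<open>2^[n] * 2^[m]\<close>, identified with \<open>2^([n]\<times>[m])\<close>.\<close>
definition bool2_ea :: "nat \<Rightarrow> nat \<Rightarrow> (nat \<times> nat) set effalg" where
  "bool2_ea n m = powerset_ea ({1..n} \<times> {1..m})"

definition bool_hom :: "nat \<Rightarrow> nat \<Rightarrow> (nat set \<Rightarrow> nat set) \<Rightarrow> bool" where
  "bool_hom n n' f \<longleftrightarrow>
     (\<forall>X. X \<subseteq> {1..n} \<longrightarrow> f X \<subseteq> {1..n'}) \<and>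
     f {} = {} \<and> f {1..n} = {1..n'} \<and>
     (\<forall>X Y. X \<subseteq> {1..n} \<and> Y \<subseteq> {1..n} \<longrightarrow> f (X \<union> Y) = f X \<union> f Y) \<and>
     (\<forall>X Y. X \<subseteq> {1..n} \<and> Y \<subseteq> {1..n} \<longrightarrow> f (X \<inter> Y) = f X \<inter> f Y) \<and>
     (\<forall>X. X \<subseteq> {1..n} \<longrightarrow> f ({1..n} - X) = {1..n'} - f X)"

definition bool_coprod ::
  "(nat set \<Rightarrow> nat set) \<Rightarrow> (nat set \<Rightarrow> nat set) \<Rightarrow> (nat \<times> nat) set \<Rightarrow> (nat \<times> nat) set" where
  "bool_coprod s t X = (\<Union>(i,j)\<in>X. s {i} \<times> t {j})"

definition bimorphism ::
  "'a effalg \<Rightarrow> 'b effalg \<Rightarrow> 'c effalg \<Rightarrow> ('a \<Rightarrow> 'b \<Rightarrow> 'c) \<Rightarrow> bool" where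
  "bimorphism A B C h \<longleftrightarrow>
     (\<forall>a\<in>carrier A. \<forall>b\<in>carrier B. h a b \<in> carrier C) \<and>
     h (eone A) (eone B) = eone C \<and>
     (\<forall>a1 a2 b. orth A a1 a2 \<and> b \<in> carrier B \<longrightarrow>
        orth C (h a1 b) (h a2 b) \<and> h (eplus A a1 a2) b = eplus C (h a1 b) (h a2 b)) \<and>
     (\<forall>a b1 b2. a \<in> carrier A \<and> orth B b1 b2 \<longrightarrow>
        orth C (h a b1) (h a b2) \<and> h a (eplus B b1 b2) = eplus C (h a b1) (h a b2))"

text \<open>An object of \<open>\<integral>R(A)\<close> is a pair \<open>(n, g)\<close> with \<open>g : 2^[n] \<rightarrow> A\<close> an EA morphism.
A cocone with apex C is a family \<open>v n gA m gB : 2^[n]*2^[m] \<rightarrow> C\<close> of EA morphisms, indexed by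
pairs of objects, compatible with all arrows \<open>(fA, fB)\<close> of \<open>\<integral>R(A) \<times> \<integral>R(B)\<close>.\<close>

type_synonym ('a,'b,'c) cocone_fam =
  "nat \<Rightarrow> (nat set \<Rightarrow> 'a) \<Rightarrow> nat \<Rightarrow> (nat set \<Rightarrow> 'b) \<Rightarrow> (nat \<times> nat) set \<Rightarrow> 'c"

definition intR_obj :: "'a effalg \<Rightarrow> nat \<Rightarrow> (nat set \<Rightarrow> 'a) \<Rightarrow> bool" where
  "intR_obj A n g \<longleftrightarrow> ea_morphism (bool_ea n) A g"

definition intR_arrow ::
  "'a effalg \<Rightarrow> nat \<Rightarrow> (nat set \<Rightarrow> 'a) \<Rightarrow> nat \<Rightarrow> (nat set \<Rightarrow> 'a) \<Rightarrow> (nat set \<Rightarrow> nat set) \<Rightarrow> bool" where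
  "intR_arrow A n g n' g' f \<longleftrightarrow>
     intR_obj A n g \<and> intR_obj A n' g' \<and> bool_hom n n' f \<and>
     (\<forall>X. X \<subseteq> {1..n} \<longrightarrow> g' (f X) = g X)"

definition cocone :: "'a effalg \<Rightarrow> 'b effalg \<Rightarrow> 'c effalg \<Rightarrow> ('a,'b,'c) cocone_fam \<Rightarrow> bool" where
  "cocone A B C v \<longleftrightarrow>
     (\<forall>n gA m gB. intR_obj A n gA \<and> intR_obj B m gB \<longrightarrow>
        ea_morphism (bool2_ea n m) C (v n gA m gB)) \<and>
     (\<forall>n gA n' gA' fA m gB m' gB' fB.
        intR_arrow A n gA n' gA' fA \<and> intR_arrow B m gB m' gB' fB \<longrightarrow>
        (\<forall>X. X \<subseteq> {1..n} \<times> {1..m} \<longrightarrow>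
           v n' gA' m' gB' (bool_coprod fA fB X) = v n gA m gB X))"

definition esum :: "'c effalg \<Rightarrow> ('i::linorder \<Rightarrow> 'c) \<Rightarrow> 'i set \<Rightarrow> 'c" where
  "esum C f S = foldr (\<lambda>x acc. eplus C (f x) acc) (sorted_list_of_set S) (ezero C)"

definition cocone_of_bimorphism ::
  "'c effalg \<Rightarrow> ('a \<Rightarrow> 'b \<Rightarrow> 'c) \<Rightarrow> ('a,'b,'c) cocone_fam" where
  "cocone_of_bimorphism C h = (\<lambda>n gA m gB X. esum C (\<lambda>(i,j). h (gA {i}) (gB {j})) X)"

definition observable :: "'a effalg \<Rightarrow> 'a \<Rightarrow> nat set \<Rightarrow> 'a" where
  "observable A a X =
     (if X = {} then ezero A else if X = {1} then a else if X = {2} then ecompl A a else eone A)"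

definition bimorphism_of_cocone ::
  "'a effalg \<Rightarrow> 'b effalg \<Rightarrow> ('a,'b,'c) cocone_fam \<Rightarrow> 'a \<Rightarrow> 'b \<Rightarrow> 'c" where
  "bimorphism_of_cocone A B v = (\<lambda>a b. v 2 (observable A a) 2 (observable B b) {(1,1)})"

end

theory Submission
  imports Defs
begin

locale ea = fixes E :: "'a effalg" assumes ea: "effect_algebra E"
begin

lemma parts: "ezero E \<in> carrier E \<and> eone E \<in> carrier E \<and>
     (\<forall>a b. orth E a b \<longrightarrow> a \<in> carrier E \<and> b \<in> carrier E \<and> eplus E a b \<in> carrier E) \<and>
     (\<forall>a b. orth E a b \<longrightarrow> orth E b a \<and> eplus E a b = eplus E b a) \<and>
     (\<forall>a b c. orth E a b \<and> orth E (eplus E a b) c \<longrightarrow>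
        orth E b c \<and> orth E a (eplus E b c) \<and>
        eplus E (eplus E a b) c = eplus E a (eplus E b c)) \<and>
     (\<forall>a\<in>carrier E. \<exists>!b. b \<in> carrier E \<and> orth E a b \<and> eplus E a b = eone E) \<and>
     (\<forall>a. orth E a (eone E) \<longrightarrow> a = ezero E)"
  using ea unfolding effect_algebra_def .

lemma orth_carrier: "orth E a b \<Longrightarrow> a \<in> carrier E \<and> b \<in> carrier E \<and> eplus E a b \<in> carrier E"
  using parts[THEN conjunct2, THEN conjunct2, THEN conjunct1] by blast

lemma zero_in: "ezero E \<in> carrier E" and one_in: "eone E \<in> carrier E"
  using parts[THEN conjunct1] parts[THEN conjunct2, THEN conjunct1] by blast+

lemma comm: "orth E a b \<Longrightarrow> orth E b a \<and> eplus E a b = eplus E b a"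
  using parts[THEN conjunct2, THEN conjunct2, THEN conjunct2, THEN conjunct1] by blast

lemma assoc: "orth E a b \<Longrightarrow> orth E (eplus E a b) c \<Longrightarrow>
   orth E b c \<and> orth E a (eplus E b c) \<and> eplus E (eplus E a b) c = eplus E a (eplus E b c)"
  using parts[THEN conjunct2, THEN conjunct2, THEN conjunct2, THEN conjunct2, THEN conjunct1] by blast

lemma e4: "orth E a (eone E) \<Longrightarrow> a = ezero E"
  using parts[THEN conjunct2, THEN conjunct2, THEN conjunct2, THEN conjunct2, THEN conjunct2, THEN conjunct2] by blast

lemma compl_ex: "a \<in> carrier E \<Longrightarrow> \<exists>!b. b \<in> carrier E \<and> orth E a b \<and> eplus E a b = eone E"
  using parts[THEN conjunct2, THEN conjunct2, THEN conjunct2, THEN conjunct2, THEN conjunct2, THEN conjunct1] by blast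

lemma compl: assumes "a \<in> carrier E" shows "ecompl E a \<in> carrier E \<and> orth E a (ecompl E a) \<and> eplus E a (ecompl E a) = eone E"
  unfolding ecompl_def by (rule theI'[OF compl_ex[OF assms]])

lemma compl_unique: "a \<in> carrier E \<Longrightarrow> b \<in> carrier E \<Longrightarrow> orth E a b \<Longrightarrow> eplus E a b = eone E \<Longrightarrow> b = ecompl E a"
  using compl compl_ex by blast

lemma assoc': assumes "orth E b c" "orth E a (eplus E b c)"
  shows "orth E a b \<and> orth E (eplus E a b) c \<and> eplus E (eplus E a b) c = eplus E a (eplus E b c)"
proof -
  have 1: "orth E (eplus E c b) a" using comm[OF assms(2)] comm[OF assms(1)] by simp
  have cb: "orth E c b" using comm[OF assms(1)] by simp
  note x = assoc[OF cb 1]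
  have ab: "orth E a b" using comm x by blast
  have "orth E (eplus E b a) c" using comm x by blast
  then have 2: "orth E (eplus E a b) c" using comm[OF ab] by simp
  have "eplus E (eplus E a b) c = eplus E c (eplus E a b)" using comm[OF 2] by simp
  also have "\<dots> = eplus E c (eplus E b a)" using comm[OF ab] by simp
  also have "\<dots> = eplus E (eplus E c b) a" using x by simp
  also have "\<dots> = eplus E a (eplus E c b)" using comm[OF 1] by simp
  also have "\<dots> = eplus E a (eplus E b c)" using comm[OF assms(1)] by simp
  finally show ?thesis using ab 2 by simp
qed

lemma swap: assumes "orth E b c" "orth E a (eplus E b c)"
  shows "orth E b (eplus E a c) \<and> eplus E a (eplus E b c) = eplus E b (eplus E a c)"
proof -
  note x = assoc'[OF assms]
  have ab: "orth E a b" using x by simp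
  have e: "eplus E a b = eplus E b a" using comm[OF ab] by simp
  have "orth E (eplus E b a) c" using x unfolding e by simp
  note y = assoc[OF conjunct1[OF comm[OF ab]] this]
  show ?thesis using x y unfolding e by simp
qed

lemma one_zero: "orth E (eone E) (ezero E) \<and> eplus E (eone E) (ezero E) = eone E"
proof -
  note c = compl[OF one_in]
  then have "ecompl E (eone E) = ezero E" using e4[OF conjunct1[OF comm[of "eone E" "ecompl E (eone E)"]]] by simp
  then show ?thesis using c by simp
qed

lemma zero_right: assumes "a \<in> carrier E" shows "orth E a (ezero E) \<and> eplus E a (ezero E) = a"
proof -
  define b where "b = ecompl E a"
  have b: "b \<in> carrier E" "orth E a b" "eplus E a b = eone E" using compl[OF assms] b_def by auto
  have ba: "orth E b a" "eplus E b a = eone E" using comm[OF b(2)] b by auto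
  have "orth E (eplus E b a) (ezero E)" using ba one_zero by simp
  note x = assoc[OF ba(1) this]
  have h1: "eplus E b (eplus E a (ezero E)) = eone E" using x ba one_zero by simp
  have h2: "eplus E a (ezero E) \<in> carrier E" using orth_carrier x by blast
  have "a = ecompl E b" using compl_unique[OF b(1) assms ba(1) ba(2)] .
  moreover have "eplus E a (ezero E) = ecompl E b" using compl_unique[OF b(1) h2 _ h1] x by blast
  ultimately have "eplus E a (ezero E) = a" by simp
  then show ?thesis using x by simp
qed

lemma zero_left: assumes "a \<in> carrier E" shows "orth E (ezero E) a \<and> eplus E (ezero E) a = a"
proof -
  have "orth E a (ezero E)" "eplus E a (ezero E) = a" using zero_right[OF assms] by auto
  then show ?thesis using comm[OF \<open>orth E a (ezero E)\<close>] by simp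
qed

lemma cancel: assumes "orth E a b" "orth E a c" "eplus E a b = eplus E a c" shows "b = c"
proof -
  have ab: "eplus E a b \<in> carrier E" using orth_carrier assms by blast
  define d where "d = ecompl E (eplus E a b)"
  note dd = compl[OF ab, folded d_def]
  have "orth E (eplus E b a) d" "eplus E (eplus E b a) d = eone E" using dd comm[OF assms(1)] by auto
  note x = assoc[OF conjunct1[OF comm[OF assms(1)]] this(1)]
  have "orth E (eplus E c a) d" "eplus E (eplus E c a) d = eone E" using dd comm[OF assms(2)] assms(3) by auto
  note y = assoc[OF conjunct1[OF comm[OF assms(2)]] this(1)]
  have ad: "eplus E a d \<in> carrier E" using x orth_carrier by blast
  have 1: "orth E (eplus E a d) b" "eplus E (eplus E a d) b = eone E"
    using comm[OF conjunct1[OF conjunct2[OF x]]] x \<open>eplus E (eplus E b a) d = eone E\<close> by auto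
  have 2: "orth E (eplus E a d) c" "eplus E (eplus E a d) c = eone E"
    using comm[OF conjunct1[OF conjunct2[OF y]]] y \<open>eplus E (eplus E c a) d = eone E\<close> by auto
  have bc: "b \<in> carrier E" "c \<in> carrier E" using orth_carrier assms by blast+
  show ?thesis using compl_unique[OF ad bc(1) 1] compl_unique[OF ad bc(2) 2] by simp
qed

lemma idem_zero: assumes "orth E x x" "eplus E x x = x" shows "x = ezero E"
proof -
  have xc: "x \<in> carrier E" using orth_carrier[OF assms(1)] by simp
  have z: "eplus E x (ezero E) = x" using zero_right[OF xc] by simp
  have "eplus E x x = eplus E x (ezero E)" unfolding z assms(2) ..
  then show ?thesis by (rule cancel[OF assms(1) conjunct1[OF zero_right[OF xc]]])
qed

lemma down: assumes "orth E (eplus E a c) b" "orth E a c" shows "orth E a b"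
proof -
  have ca: "orth E c a" and e: "eplus E a c = eplus E c a" using comm[OF assms(2)] by auto
  have "orth E (eplus E c a) b" using assms(1) unfolding e .
  from assoc[OF ca this] show ?thesis by (rule conjunct1)
qed

end

lemma esum_empty[simp]: "esum C f {} = ezero C" by (simp add: esum_def)

lemma esum_Min: "finite S \<Longrightarrow> S \<noteq> {} \<Longrightarrow> esum C f S = eplus C (f (Min S)) (esum C f (S - {Min S}))"
  unfolding esum_def by (subst sorted_list_of_set_nonempty) auto

lemma esum_single: "esum C f {x} = eplus C (f x) (ezero C)" by (simp add: esum_def)

lemma esum_cong: assumes "\<And>x. x \<in> S \<Longrightarrow> f x = g x" shows "esum C f S = esum C g S"
proof (cases "finite S")
  case True
  then show ?thesis unfolding esum_def using assms by (intro foldr_cong) auto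
next
  case False
  then show ?thesis unfolding esum_def by simp
qed

definition ok :: "'c effalg \<Rightarrow> ('i::linorder \<Rightarrow> 'c) \<Rightarrow> 'i set \<Rightarrow> bool" where
 "ok C f T \<longleftrightarrow> finite T \<and> (\<forall>x\<in>T. f x \<in> carrier C) \<and>
    (\<forall>S. S \<subseteq> T \<and> S \<noteq> {} \<longrightarrow> orth C (f (Min S)) (esum C f (S - {Min S})))"

context ea begin

lemma ok_subset: "ok E f T \<Longrightarrow> S \<subseteq> T \<Longrightarrow> ok E f S"
  unfolding ok_def using finite_subset by (metis subset_trans subsetD)

lemma ok_fin: "ok E f T \<Longrightarrow> finite T" unfolding ok_def by simp

lemma ok_orth: "ok E f T \<Longrightarrow> T \<noteq> {} \<Longrightarrow> orth E (f (Min T)) (esum E f (T - {Min T}))"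
  unfolding ok_def by blast

lemma ok_carrier: assumes "ok E f T" shows "esum E f T \<in> carrier E"
proof (cases "T = {}")
  case True then show ?thesis by (simp add: zero_in)
next
  case False
  have "esum E f T = eplus E (f (Min T)) (esum E f (T - {Min T}))" by (rule esum_Min[OF ok_fin[OF assms] False])
  then show ?thesis using orth_carrier[OF ok_orth[OF assms False]] by simp
qed

lemma ok_empty: "ok E f {}" unfolding ok_def by simp

lemma ok_single: assumes "f x \<in> carrier E" shows "ok E f {x}"
  unfolding ok_def proof (intro conjI allI impI)
  show "finite {x}" by simp
  show "\<forall>y\<in>{x}. f y \<in> carrier E" using assms by simp
  fix S assume "S \<subseteq> {x} \<and> S \<noteq> {}"
  then have "S = {x}" by blast
  then show "orth E (f (Min S)) (esum E f (S - {Min S}))" using zero_right[OF assms] by simp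
qed

lemma esum_single': "f x \<in> carrier E \<Longrightarrow> esum E f {x} = f x"
  using zero_right[of "f x"] esum_single[of E f x] by simp

lemma union_eq: "ok E f X \<Longrightarrow> ok E f Y \<Longrightarrow> X \<inter> Y = {} \<Longrightarrow> orth E (esum E f X) (esum E f Y) \<Longrightarrow>
  esum E f (X \<union> Y) = eplus E (esum E f X) (esum E f Y) \<and>
  (X \<union> Y \<noteq> {} \<longrightarrow> orth E (f (Min (X \<union> Y))) (esum E f ((X \<union> Y) - {Min (X \<union> Y)})))"
proof (induct "card (X \<union> Y)" arbitrary: X Y rule: less_induct)
  case less
  have fX: "finite X" and fY: "finite Y" using less.prems ok_fin by auto
  show ?case
  proof (cases "X = {}")
    case True
    then show ?thesis using zero_left[OF ok_carrier[OF less.prems(2)]] ok_orth[OF less.prems(2)] by simp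
  next
    case XN: False
    show ?thesis
    proof (cases "Y = {}")
      case True
      then show ?thesis using zero_right[OF ok_carrier[OF less.prems(1)]] ok_orth[OF less.prems(1)] by simp
    next
      case YN: False
      define m where "m = Min (X \<union> Y)"
      have fU: "finite (X \<union> Y)" using fX fY by simp
      have mU: "m \<in> X \<union> Y" unfolding m_def using Min_in[OF fU] XN by simp
      have mle: "\<And>z. z \<in> X \<union> Y \<Longrightarrow> m \<le> z" unfolding m_def using Min_le[OF fU] by simp
      show ?thesis
      proof (cases "m \<in> X")
        case mX: True
        have MX: "Min X = m" using mle[of "Min X"] Min_in[OF fX XN] Min_le[OF fX mX] by simp
        have mY: "m \<notin> Y" using mX less.prems(3) by blast
        define X' where "X' = X - {m}"
        have eX: "esum E f X = eplus E (f m) (esum E f X')" using esum_Min[OF fX XN] MX X'_def by simp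
        have o1: "orth E (f m) (esum E f X')" using ok_orth[OF less.prems(1) XN] MX X'_def by simp
        have o2: "orth E (eplus E (f m) (esum E f X')) (esum E f Y)" using less.prems(4) eX by simp
        note a = assoc[OF o1 o2]
        have U': "X' \<union> Y = (X \<union> Y) - {m}" using X'_def mY by blast
        have c: "card (X' \<union> Y) < card (X \<union> Y)" unfolding U' by (rule card_Diff1_less[OF fU mU])
        have okX': "ok E f X'" using ok_subset[OF less.prems(1)] X'_def by blast
        have d: "X' \<inter> Y = {}" using less.prems(3) X'_def by blast
        have ih: "esum E f (X' \<union> Y) = eplus E (esum E f X') (esum E f Y)"
          using less.hyps[OF c okX' less.prems(2) d] a by blast
        have U: "X \<union> Y \<noteq> {}" using XN by simp
        have "esum E f (X \<union> Y) = eplus E (f m) (esum E f (X' \<union> Y))"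
          using esum_Min[OF fU U] U' m_def by simp
        then show ?thesis using ih a eX U' m_def by simp
      next
        case mX: False
        then have mY: "m \<in> Y" using mU by simp
        have MY: "Min Y = m" using mle[of "Min Y"] Min_in[OF fY YN] Min_le[OF fY mY] by simp
        define Y' where "Y' = Y - {m}"
        have eY: "esum E f Y = eplus E (f m) (esum E f Y')" using esum_Min[OF fY YN] MY Y'_def by simp
        have o1: "orth E (f m) (esum E f Y')" using ok_orth[OF less.prems(2) YN] MY Y'_def by simp
        note cXY = comm[OF less.prems(4)]
        have o2: "orth E (eplus E (f m) (esum E f Y')) (esum E f X)" using cXY eY by simp
        note a = assoc[OF o1 o2]
        have U': "X \<union> Y' = (X \<union> Y) - {m}" using Y'_def mX by blast
        have c: "card (X \<union> Y') < card (X \<union> Y)" unfolding U' by (rule card_Diff1_less[OF fU mU])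
        have okY': "ok E f Y'" using ok_subset[OF less.prems(2)] Y'_def by blast
        have d: "X \<inter> Y' = {}" using less.prems(3) Y'_def by blast
        have oXY': "orth E (esum E f X) (esum E f Y')" using comm a by blast
        have ih: "esum E f (X \<union> Y') = eplus E (esum E f X) (esum E f Y')"
          using less.hyps[OF c less.prems(1) okY' d oXY'] by blast
        have ih2: "esum E f (X \<union> Y') = eplus E (esum E f Y') (esum E f X)"
          using ih comm[OF oXY'] by simp
        have U: "X \<union> Y \<noteq> {}" using XN by simp
        have "esum E f (X \<union> Y) = eplus E (f m) (esum E f (X \<union> Y'))"
          using esum_Min[OF fU U] U' m_def by simp
        then show ?thesis using ih2 a eY U' m_def cXY by simp
      qed
    qed
  qed
qed


lemma add_split: "ok E f T \<Longrightarrow> X \<subseteq> T \<Longrightarrow>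
   orth E (esum E f X) (esum E f (T - X)) \<and> esum E f T = eplus E (esum E f X) (esum E f (T - X))"
proof (induct "card T" arbitrary: T X rule: less_induct)
  case less
  have fT: "finite T" using ok_fin less.prems by blast
  show ?case
  proof (cases "T = {}")
    case True
    then have "X = {}" using less.prems by blast
    then show ?thesis using True zero_right[OF zero_in] by simp
  next
    case TN: False
    define m where "m = Min T"
    define T' where "T' = T - {m}"
    have mT: "m \<in> T" unfolding m_def using Min_in[OF fT TN] .
    have okT': "ok E f T'" using ok_subset[OF less.prems(1)] T'_def by blast
    have o: "orth E (f m) (esum E f T')" using ok_orth[OF less.prems(1) TN] m_def T'_def by simp
    have eT: "esum E f T = eplus E (f m) (esum E f T')" using esum_Min[OF fT TN] m_def T'_def by simp
    have c: "card T' < card T" unfolding T'_def by (rule card_Diff1_less[OF fT mT])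
    have fX: "finite X" using finite_subset[OF less.prems(2) fT] .
    show ?thesis
    proof (cases "m \<in> X")
      case mX: True
      define X' where "X' = X - {m}"
      have sub: "X' \<subseteq> T'" using less.prems(2) X'_def T'_def by blast
      have dd: "T' - X' = T - X" using mX X'_def T'_def by blast
      note ih = less.hyps[OF c okT' sub, unfolded dd]
      have XN: "X \<noteq> {}" using mX by blast
      have MX: "Min X = m" using Min_le[OF fT, of "Min X"] Min_in[OF fX XN] less.prems(2) Min_le[OF fX mX] m_def by force
      have eX: "esum E f X = eplus E (f m) (esum E f X')" using esum_Min[OF fX XN] MX X'_def by simp
      have o': "orth E (f m) (eplus E (esum E f X') (esum E f (T - X)))" using o ih by simp
      note a = assoc'[OF conjunct1[OF ih] o']
      show ?thesis using a eX eT ih by simp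
    next
      case mX: False
      have sub: "X \<subseteq> T'" using less.prems(2) mX T'_def by blast
      note ih = less.hyps[OF c okT' sub]
      have TXN: "T - X \<noteq> {}" using mT mX by blast
      have fTX: "finite (T - X)" using fT by simp
      have MTX: "Min (T - X) = m" using Min_le[OF fT, of "Min (T - X)"] Min_in[OF fTX TXN] Min_le[OF fTX, of m] mT mX m_def by force
      have dd: "(T - X) - {m} = T' - X" using T'_def by blast
      have eTX: "esum E f (T - X) = eplus E (f m) (esum E f (T' - X))" using esum_Min[OF fTX TXN] MTX dd by simp
      have o': "orth E (f m) (eplus E (esum E f X) (esum E f (T' - X)))" using o ih by simp
      note a = swap[OF conjunct1[OF ih] o']
      show ?thesis using a eTX eT ih by simp
    qed
  qed
qed

lemma ok_union: assumes "ok E f X" "ok E f Y" "X \<inter> Y = {}" "orth E (esum E f X) (esum E f Y)"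
  shows "ok E f (X \<union> Y)"
  unfolding ok_def proof (intro conjI allI impI)
  show "finite (X \<union> Y)" using assms ok_fin by blast
  show "\<forall>x\<in>X \<union> Y. f x \<in> carrier E" using assms(1,2) unfolding ok_def by blast
  fix S assume S: "S \<subseteq> X \<union> Y \<and> S \<noteq> {}"
  define SX where "SX = S \<inter> X"
  define SY where "SY = S \<inter> Y"
  have okX: "ok E f SX" using ok_subset[OF assms(1)] SX_def by blast
  have okY: "ok E f SY" using ok_subset[OF assms(2)] SY_def by blast
  have d: "SX \<inter> SY = {}" using assms(3) SX_def SY_def by blast
  have SS: "SX \<union> SY = S" using S SX_def SY_def by blast
  note sx = add_split[OF assms(1), of SX]
  note sy = add_split[OF assms(2), of SY]
  have "orth E (esum E f SX) (esum E f Y)"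
    using down[of "esum E f SX" "esum E f (X - SX)" "esum E f Y"] sx assms(4) SX_def by auto
  then have "orth E (esum E f Y) (esum E f SX)" using comm by blast
  then have "orth E (esum E f SY) (esum E f SX)"
    using down[of "esum E f SY" "esum E f (Y - SY)" "esum E f SX"] sy SY_def by auto
  then have "orth E (esum E f SX) (esum E f SY)" using comm by blast
  note u = union_eq[OF okX okY d this]
  show "orth E (f (Min S)) (esum E f (S - {Min S}))" using u SS S by simp
qed

lemma ok_union_eq: assumes "ok E f X" "ok E f Y" "X \<inter> Y = {}" "orth E (esum E f X) (esum E f Y)"
  shows "ok E f (X \<union> Y) \<and> esum E f (X \<union> Y) = eplus E (esum E f X) (esum E f Y)"
  using ok_union[OF assms] union_eq[OF assms] by simp

lemma morph_zero: assumes F: "effect_algebra F" and g: "ea_morphism E F g" shows "g (ezero E) = ezero F"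
proof -
  have o: "orth E (ezero E) (eone E)" and e: "eplus E (ezero E) (eone E) = eone E"
    using zero_left[OF one_in] by auto
  have g1: "g (eone E) = eone F" using g unfolding ea_morphism_def by blast
  have "orth F (g (ezero E)) (g (eone E))"
    using g o unfolding ea_morphism_def by blast
  then have "orth F (g (ezero E)) (eone F)" using g1 by simp
  then show ?thesis using ea.e4[OF ea.intro[OF F]] by blast
qed

lemma morph_esum: assumes F: "effect_algebra F" and g: "ea_morphism E F g"
  shows "ok E f T \<Longrightarrow> g (esum E f T) = esum F (\<lambda>p. g (f p)) T"
proof (induct "card T" arbitrary: T rule: less_induct)
  case less
  have fT: "finite T" using ok_fin less.prems by blast
  show ?case
  proof (cases "T = {}")
    case True
    then show ?thesis using morph_zero[OF F g] by simp
  next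
    case TN: False
    define m where "m = Min T"
    define T' where "T' = T - {m}"
    have mT: "m \<in> T" unfolding m_def using Min_in[OF fT TN] .
    have okT': "ok E f T'" using ok_subset[OF less.prems(1)] T'_def by blast
    have o: "orth E (f m) (esum E f T')" using ok_orth[OF less.prems(1) TN] m_def T'_def by simp
    have eT: "esum E f T = eplus E (f m) (esum E f T')" using esum_Min[OF fT TN] m_def T'_def by simp
    have eT2: "esum F (\<lambda>p. g (f p)) T = eplus F (g (f m)) (esum F (\<lambda>p. g (f p)) T')"
      using esum_Min[OF fT TN] m_def T'_def by simp
    have c: "card T' < card T" unfolding T'_def by (rule card_Diff1_less[OF fT mT])
    have "g (esum E f T) = eplus F (g (f m)) (g (esum E f T'))" using eT g o unfolding ea_morphism_def by simp
    then show ?thesis using less.hyps[OF c okT'] eT2 by simp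
  qed
qed

end

lemma additive_esum:
  assumes U: "finite U"
    and add: "\<forall>X Y. X \<subseteq> U \<and> Y \<subseteq> U \<and> X \<inter> Y = {} \<longrightarrow> \<phi> (X \<union> Y) = eplus C (\<phi> X) (\<phi> Y)"
    and z: "\<phi> {} = ezero C"
  shows "X \<subseteq> U \<Longrightarrow> \<phi> X = esum C (\<lambda>p. \<phi> {p}) X"
proof (induct "card X" arbitrary: X rule: less_induct)
  case less
  have fX: "finite X" using finite_subset[OF less.prems U] .
  show ?case
  proof (cases "X = {}")
    case True then show ?thesis using z by simp
  next
    case XN: False
    define m where "m = Min X"
    have mX: "m \<in> X" unfolding m_def using Min_in[OF fX XN] .
    have c: "card (X - {m}) < card X" by (rule card_Diff1_less[OF fX mX])
    have "X = {m} \<union> (X - {m})" using mX by blast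
    then have "\<phi> X = eplus C (\<phi> {m}) (\<phi> (X - {m}))" using add less.prems mX
      by (metis Diff_disjoint Diff_subset empty_subsetI insert_subset subset_trans)
    moreover have "\<phi> (X - {m}) = esum C (\<lambda>p. \<phi> {p}) (X - {m})" using less.hyps[OF c] less.prems by blast
    moreover have "esum C (\<lambda>p. \<phi> {p}) X = eplus C (\<phi> {m}) (esum C (\<lambda>p. \<phi> {p}) (X - {m}))"
      using esum_Min[OF fX XN] m_def by simp
    ultimately show ?thesis by simp
  qed
qed


lemma pw_add: "ea_morphism (powerset_ea S) A g \<Longrightarrow> X \<subseteq> S \<Longrightarrow> Y \<subseteq> S \<Longrightarrow> X \<inter> Y = {} \<Longrightarrow>
   orth A (g X) (g Y) \<and> g (X \<union> Y) = eplus A (g X) (g Y)"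
  unfolding ea_morphism_def powerset_ea_def by simp

lemma pw_carrier: "ea_morphism (powerset_ea S) A g \<Longrightarrow> X \<subseteq> S \<Longrightarrow> g X \<in> carrier A"
  unfolding ea_morphism_def powerset_ea_def by simp

lemma pw_one: "ea_morphism (powerset_ea S) A g \<Longrightarrow> g S = eone A"
  unfolding ea_morphism_def powerset_ea_def by simp

lemma pw_zero: assumes "effect_algebra A" "ea_morphism (powerset_ea S) A g" shows "g {} = ezero A"
proof -
  have "orth A (g {}) (g S)" using pw_add[OF assms(2), of "{}" S] by simp
  then show ?thesis using pw_one[OF assms(2)] ea.e4[OF ea.intro[OF assms(1)]] by simp
qed

lemma pw_compl: assumes "effect_algebra A" "ea_morphism (powerset_ea S) A g" "X \<subseteq> S"
  shows "g (S - X) = ecompl A (g X)"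
proof -
  have "orth A (g X) (g (S - X)) \<and> g (X \<union> (S - X)) = eplus A (g X) (g (S - X))"
    using pw_add[OF assms(2) assms(3), of "S - X"] by blast
  moreover have "X \<union> (S - X) = S" using assms(3) by blast
  ultimately show ?thesis using ea.compl_unique[OF ea.intro[OF assms(1)] pw_carrier[OF assms(2,3)] pw_carrier[OF assms(2), of "S - X"]]
     pw_one[OF assms(2)] by simp
qed

lemma bh_sub: "bool_hom n n' f \<Longrightarrow> X \<subseteq> {1..n} \<Longrightarrow> f X \<subseteq> {1..n'}"
  unfolding bool_hom_def by (drule conjunct1) blast
lemma bh_empty: "bool_hom n n' f \<Longrightarrow> f {} = {}"
  unfolding bool_hom_def by (drule conjunct2, drule conjunct1) assumption
lemma bh_inter: "bool_hom n n' f \<Longrightarrow> X \<subseteq> {1..n} \<Longrightarrow> Y \<subseteq> {1..n} \<Longrightarrow> f (X \<inter> Y) = f X \<inter> f Y"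
  unfolding bool_hom_def by (drule conjunct2, drule conjunct2, drule conjunct2, drule conjunct2, drule conjunct1) blast

lemma intR_obj_pw: "intR_obj A n g \<longleftrightarrow> ea_morphism (powerset_ea {1..n}) A g"
  unfolding intR_obj_def bool_ea_def ..

lemma cob_eq: "cocone_of_bimorphism C h n gA m gB X = esum C (\<lambda>(i,j). h (gA {i}) (gB {j})) X"
  by (simp add: cocone_of_bimorphism_def)

locale bis = A: ea A + B: ea B + C: ea C for A :: "'a effalg" and B :: "'b effalg" and C :: "'c effalg" +
  fixes h :: "'a \<Rightarrow> 'b \<Rightarrow> 'c"
  assumes bim: "bimorphism A B C h"
begin

lemma h_carrier: "a \<in> carrier A \<Longrightarrow> b \<in> carrier B \<Longrightarrow> h a b \<in> carrier C"
  using bim unfolding bimorphism_def by blast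

lemma h_one: "h (eone A) (eone B) = eone C"
  using bim unfolding bimorphism_def by blast

lemma h_addL: "orth A a1 a2 \<Longrightarrow> b \<in> carrier B \<Longrightarrow> orth C (h a1 b) (h a2 b) \<and> h (eplus A a1 a2) b = eplus C (h a1 b) (h a2 b)"
  using bim unfolding bimorphism_def by blast

lemma h_addR: "a \<in> carrier A \<Longrightarrow> orth B b1 b2 \<Longrightarrow> orth C (h a b1) (h a b2) \<and> h a (eplus B b1 b2) = eplus C (h a b1) (h a b2)"
  using bim unfolding bimorphism_def by blast

lemma h_zeroL: assumes "b \<in> carrier B" shows "h (ezero A) b = ezero C"
proof -
  have o: "orth A (ezero A) (ezero A)" and e: "eplus A (ezero A) (ezero A) = ezero A" using A.zero_right[OF A.zero_in] by auto
  show ?thesis using h_addL[OF o assms] e C.idem_zero by simp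
qed

lemma h_zeroR: assumes "a \<in> carrier A" shows "h a (ezero B) = ezero C"
proof -
  have o: "orth B (ezero B) (ezero B)" and e: "eplus B (ezero B) (ezero B) = ezero B" using B.zero_right[OF B.zero_in] by auto
  show ?thesis using h_addR[OF assms o] e C.idem_zero by simp
qed

lemma row: assumes gA: "intR_obj A n gA" and gB: "intR_obj B m gB" and s: "s \<in> {1..n}"
  shows "T \<subseteq> {1..m} \<Longrightarrow> ok C (\<lambda>(i,j). h (gA {i}) (gB {j})) ({s} \<times> T) \<and>
     esum C (\<lambda>(i,j). h (gA {i}) (gB {j})) ({s} \<times> T) = h (gA {s}) (gB T)"
proof -
  assume T: "T \<subseteq> {1..m}"
  have fT: "finite T" using finite_subset[OF T] by simp
  have gA': "ea_morphism (powerset_ea {1..n}) A gA" and gB': "ea_morphism (powerset_ea {1..m}) B gB"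
    using gA gB intR_obj_pw by auto
  have xs: "gA {s} \<in> carrier A" using pw_carrier[OF gA'] s by simp
  show ?thesis using fT T
  proof (induct T rule: finite_induct)
    case empty
    then show ?case using C.ok_empty pw_zero[OF B.ea gB'] h_zeroR[OF xs] by simp
  next
    case (insert t T)
    let ?F = "\<lambda>(i,j). h (gA {i}) (gB {j})"
    have tm: "t \<in> {1..m}" and Tm: "T \<subseteq> {1..m}" using insert by auto
    note ih = insert(3)[OF Tm]
    have yc: "gB {t} \<in> carrier B" using pw_carrier[OF gB'] tm by simp
    have okt: "ok C ?F {(s,t)}" using C.ok_single[of ?F "(s,t)"] h_carrier[OF xs yc] by simp
    have et: "esum C ?F {(s,t)} = h (gA {s}) (gB {t})" using C.esum_single'[of ?F "(s,t)"] h_carrier[OF xs yc] by simp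
    have ob: "orth B (gB {t}) (gB T) \<and> gB ({t} \<union> T) = eplus B (gB {t}) (gB T)"
      using pw_add[OF gB', of "{t}" T] tm Tm insert(2) by simp
    note hh = h_addR[OF xs conjunct1[OF ob]]
    have d: "{(s,t)} \<inter> ({s} \<times> T) = {}" using insert(2) by blast
    have o: "orth C (esum C ?F {(s,t)}) (esum C ?F ({s} \<times> T))" using hh ih et by simp
    note u = C.ok_union_eq[OF okt conjunct1[OF ih] d o]
    have e: "{s} \<times> insert t T = {(s,t)} \<union> ({s} \<times> T)" by blast
    show ?case unfolding e using u et ih hh ob by simp
  qed
qed

lemma rect: assumes gA: "intR_obj A n gA" and gB: "intR_obj B m gB" and T: "T \<subseteq> {1..m}"
  shows "S \<subseteq> {1..n} \<Longrightarrow> ok C (\<lambda>(i,j). h (gA {i}) (gB {j})) (S \<times> T) \<and>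
     esum C (\<lambda>(i,j). h (gA {i}) (gB {j})) (S \<times> T) = h (gA S) (gB T)"
proof -
  assume S: "S \<subseteq> {1..n}"
  have fS: "finite S" using finite_subset[OF S] by simp
  have gA': "ea_morphism (powerset_ea {1..n}) A gA" and gB': "ea_morphism (powerset_ea {1..m}) B gB"
    using gA gB intR_obj_pw by auto
  have yc: "gB T \<in> carrier B" using pw_carrier[OF gB' T] .
  show ?thesis using fS S
  proof (induct S rule: finite_induct)
    case empty
    then show ?case using C.ok_empty pw_zero[OF A.ea gA'] h_zeroL[OF yc] by simp
  next
    case (insert s S)
    let ?F = "\<lambda>(i,j). h (gA {i}) (gB {j})"
    have sn: "s \<in> {1..n}" and Sn: "S \<subseteq> {1..n}" using insert by auto
    note ih = insert(3)[OF Sn]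
    note r = row[OF gA gB sn T]
    have oa: "orth A (gA {s}) (gA S) \<and> gA ({s} \<union> S) = eplus A (gA {s}) (gA S)"
      using pw_add[OF gA', of "{s}" S] sn Sn insert(2) by simp
    note hh = h_addL[OF conjunct1[OF oa] yc]
    have d: "({s} \<times> T) \<inter> (S \<times> T) = {}" using insert(2) by blast
    have o: "orth C (esum C ?F ({s} \<times> T)) (esum C ?F (S \<times> T))" using hh ih r by simp
    note u = C.ok_union_eq[OF conjunct1[OF r] conjunct1[OF ih] d o]
    have e: "insert s S \<times> T = ({s} \<times> T) \<union> (S \<times> T)" by blast
    show ?case unfolding e using u r ih hh oa by simp
  qed
qed

lemma w_morph: assumes gA: "intR_obj A n gA" and gB: "intR_obj B m gB"
  shows "ea_morphism (bool2_ea n m) C (cocone_of_bimorphism C h n gA m gB)"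
proof -
  let ?F = "\<lambda>(i,j). h (gA {i}) (gB {j})"
  let ?G = "{1..n} \<times> {1..m}"
  note r = rect[OF gA gB order_refl order_refl]
  have gA': "ea_morphism (powerset_ea {1..n}) A gA" and gB': "ea_morphism (powerset_ea {1..m}) B gB"
    using gA gB intR_obj_pw by auto
  have okG: "ok C ?F ?G" using r by simp
  show ?thesis unfolding ea_morphism_def bool2_ea_def cob_eq
  proof (intro conjI allI impI ballI)
    fix X assume "X \<in> carrier (powerset_ea ?G)"
    then have "X \<subseteq> ?G" unfolding powerset_ea_def by simp
    then show "esum C ?F X \<in> carrier C" using C.ok_carrier C.ok_subset[OF okG] by blast
  next
    show "esum C ?F (eone (powerset_ea ?G)) = eone C"
      using r pw_one[OF gA'] pw_one[OF gB'] h_one unfolding powerset_ea_def by simp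
  next
    fix X Y assume "orth (powerset_ea ?G) X Y"
    then have X: "X \<subseteq> ?G" and Y: "Y \<subseteq> ?G" and d: "X \<inter> Y = {}" unfolding powerset_ea_def by auto
    have ok: "ok C ?F (X \<union> Y)" using C.ok_subset[OF okG] X Y by blast
    have e: "(X \<union> Y) - X = Y" using d by blast
    note a = C.add_split[OF ok, of X, unfolded e]
    show "orth C (esum C ?F X) (esum C ?F Y)" using a by simp
    show "esum C ?F (eplus (powerset_ea ?G) X Y) = eplus C (esum C ?F X) (esum C ?F Y)"
      using a unfolding powerset_ea_def by simp
  qed
qed


lemma compat: assumes aA: "intR_arrow A n gA n' gA' fA" and aB: "intR_arrow B m gB m' gB' fB"
  and X: "X \<subseteq> {1..n} \<times> {1..m}"
  shows "cocone_of_bimorphism C h n' gA' m' gB' (bool_coprod fA fB X) = cocone_of_bimorphism C h n gA m gB X"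
proof -
  have oA: "intR_obj A n gA" "intR_obj A n' gA'" and hA: "bool_hom n n' fA"
    and cA: "\<And>X. X \<subseteq> {1..n} \<Longrightarrow> gA' (fA X) = gA X" using aA unfolding intR_arrow_def by auto
  have oB: "intR_obj B m gB" "intR_obj B m' gB'" and hB: "bool_hom m m' fB"
    and cB: "\<And>X. X \<subseteq> {1..m} \<Longrightarrow> gB' (fB X) = gB X" using aB unfolding intR_arrow_def by auto
  have hA1: "\<And>i. i \<in> {1..n} \<Longrightarrow> fA {i} \<subseteq> {1..n'}" using bh_sub[OF hA] by simp
  have hB1: "\<And>i. i \<in> {1..m} \<Longrightarrow> fB {i} \<subseteq> {1..m'}" using bh_sub[OF hB] by simp
  have hA2: "\<And>i i'. i \<in> {1..n} \<Longrightarrow> i' \<in> {1..n} \<Longrightarrow> i \<noteq> i' \<Longrightarrow> fA {i} \<inter> fA {i'} = {}"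
  proof -
    fix i i' assume "i \<in> {1..n}" "i' \<in> {1..n}" "i \<noteq> i'"
    note ii = this
    have a2: "fA {} = {}" using bh_empty[OF hA] .
    have "fA ({i} \<inter> {i'}) = fA {i} \<inter> fA {i'}" using bh_inter[OF hA, of "{i}" "{i'}"] ii by simp
    moreover have "{i} \<inter> {i'} = {}" using ii by simp
    ultimately show "fA {i} \<inter> fA {i'} = {}" using a2 by simp
  qed
  have hB2: "\<And>i i'. i \<in> {1..m} \<Longrightarrow> i' \<in> {1..m} \<Longrightarrow> i \<noteq> i' \<Longrightarrow> fB {i} \<inter> fB {i'} = {}"
  proof -
    fix i i' assume "i \<in> {1..m}" "i' \<in> {1..m}" "i \<noteq> i'"
    note ii = this
    have a2: "fB {} = {}" using bh_empty[OF hB] .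
    have "fB ({i} \<inter> {i'}) = fB {i} \<inter> fB {i'}" using bh_inter[OF hB, of "{i}" "{i'}"] ii by simp
    moreover have "{i} \<inter> {i'} = {}" using ii by simp
    ultimately show "fB {i} \<inter> fB {i'} = {}" using a2 by simp
  qed
  let ?G = "{1..n} \<times> {1..m}"
  let ?G' = "{1..n'} \<times> {1..m'}"
  let ?bc = "bool_coprod fA fB"
  have bc_sub: "\<And>Z. Z \<subseteq> ?G \<Longrightarrow> ?bc Z \<subseteq> ?G'"
  proof
    fix Z x assume Z: "Z \<subseteq> ?G" and x: "x \<in> ?bc Z"
    then obtain i j where ij: "(i,j) \<in> Z" "x \<in> fA {i} \<times> fB {j}" unfolding bool_coprod_def by blast
    have "i \<in> {1..n}" "j \<in> {1..m}" using ij Z by auto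
    then show "x \<in> ?G'" using hA1 hB1 ij(2) by blast
  qed
  have bc_un: "\<And>Z1 Z2. ?bc (Z1 \<union> Z2) = ?bc Z1 \<union> ?bc Z2" unfolding bool_coprod_def by blast
  have bc_disj: "\<And>Z1 Z2. Z1 \<subseteq> ?G \<Longrightarrow> Z2 \<subseteq> ?G \<Longrightarrow> Z1 \<inter> Z2 = {} \<Longrightarrow> ?bc Z1 \<inter> ?bc Z2 = {}"
  proof -
    fix Z1 Z2 assume Z: "Z1 \<subseteq> ?G" "Z2 \<subseteq> ?G" "Z1 \<inter> Z2 = {}"
    show "?bc Z1 \<inter> ?bc Z2 = {}"
    proof (rule ccontr)
      assume "?bc Z1 \<inter> ?bc Z2 \<noteq> {}"
      then obtain x y i j i' j' where "(i,j) \<in> Z1" "(i',j') \<in> Z2" "x \<in> fA {i}" "y \<in> fB {j}"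
        "x \<in> fA {i'}" "y \<in> fB {j'}" unfolding bool_coprod_def by blast
      moreover have "i \<noteq> i' \<or> j \<noteq> j'" using calculation Z by blast
      moreover have "i \<in> {1..n}" "j \<in> {1..m}" "i' \<in> {1..n}" "j' \<in> {1..m}" using calculation Z by auto
      ultimately show False using hA2[of i i'] hB2[of j j'] by auto
    qed
  qed
  let ?F' = "\<lambda>(i,j). h (gA' {i}) (gB' {j})"
  let ?F = "\<lambda>(i,j). h (gA {i}) (gB {j})"
  have okG': "ok C ?F' ?G'" using rect[OF oA(2) oB(2) order_refl order_refl] by simp
  define \<phi> where "\<phi> Z = esum C ?F' (?bc Z)" for Z
  have add: "\<forall>Z1 Z2. Z1 \<subseteq> ?G \<and> Z2 \<subseteq> ?G \<and> Z1 \<inter> Z2 = {} \<longrightarrow> \<phi> (Z1 \<union> Z2) = eplus C (\<phi> Z1) (\<phi> Z2)"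
  proof (intro allI impI)
    fix Z1 Z2 assume Z: "Z1 \<subseteq> ?G \<and> Z2 \<subseteq> ?G \<and> Z1 \<inter> Z2 = {}"
    have s1: "?bc Z1 \<subseteq> ?G'" using bc_sub Z by simp
    have s2: "?bc Z2 \<subseteq> ?G'" using bc_sub Z by simp
    have ok: "ok C ?F' (?bc Z1 \<union> ?bc Z2)" using C.ok_subset[OF okG' Un_least[OF s1 s2]] .
    have "?bc Z1 \<inter> ?bc Z2 = {}" using bc_disj Z by simp
    then have e: "(?bc Z1 \<union> ?bc Z2) - ?bc Z1 = ?bc Z2" by blast
    show "\<phi> (Z1 \<union> Z2) = eplus C (\<phi> Z1) (\<phi> Z2)"
      using C.add_split[OF ok, of "?bc Z1", unfolded e] unfolding \<phi>_def bc_un by simp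
  qed
  have z: "\<phi> {} = ezero C" unfolding \<phi>_def bool_coprod_def by simp
  have "\<phi> X = esum C (\<lambda>p. \<phi> {p}) X" by (rule additive_esum[OF _ add z X]) simp
  also have "\<dots> = esum C ?F X"
  proof (rule esum_cong)
    fix p assume p: "p \<in> X"
    obtain i j where ij: "p = (i,j)" by force
    have i: "i \<in> {1..n}" and j: "j \<in> {1..m}" using p ij X by auto
    have "\<phi> {p} = esum C ?F' (fA {i} \<times> fB {j})" unfolding \<phi>_def ij bool_coprod_def by simp
    also have "\<dots> = h (gA' (fA {i})) (gB' (fB {j}))" using rect[OF oA(2) oB(2) hB1[OF j] hA1[OF i]] by simp
    also have "\<dots> = h (gA {i}) (gB {j})" using cA[of "{i}"] cB[of "{j}"] i j by simp
    finally show "\<phi> {p} = ?F p" using ij by simp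
  qed
  finally show ?thesis unfolding cob_eq \<phi>_def .
qed

lemma cocone_of: "cocone A B C (cocone_of_bimorphism C h)"
  unfolding cocone_def
proof (intro conjI allI impI)
  fix n gA m gB assume "intR_obj A n gA \<and> intR_obj B m gB"
  then show "ea_morphism (bool2_ea n m) C (cocone_of_bimorphism C h n gA m gB)" using w_morph by blast
next
  fix n gA n' gA' fA m gB m' gB' fB X
  assume "intR_arrow A n gA n' gA' fA \<and> intR_arrow B m gB m' gB' fB" "X \<subseteq> {1..n} \<times> {1..m}"
  then show "cocone_of_bimorphism C h n' gA' m' gB' (bool_coprod fA fB X) = cocone_of_bimorphism C h n gA m gB X"
    using compat by blast
qed

lemma obs1[simp]: "observable E a {1} = a" by (simp add: observable_def)
lemma obs1'[simp]: "observable E a {Suc 0} = a" by (simp add: observable_def)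

lemma back_eq: assumes "a \<in> carrier A" "b \<in> carrier B"
  shows "bimorphism_of_cocone A B (cocone_of_bimorphism C h) a b = h a b"
  unfolding bimorphism_of_cocone_def cob_eq
  using C.esum_single'[of "\<lambda>(i,j). h (observable A a {i}) (observable B b {j})" "(1,1)"] h_carrier[OF assms]
  by (simp add: obs1)

end

lemma set12: "X \<subseteq> {1,2::nat} \<Longrightarrow> X = {} \<or> X = {1} \<or> X = {2} \<or> X = {1,2}" by auto

lemma obs_vals: "observable E a {} = ezero E" "observable E a {1} = a" "observable E a {2} = ecompl E a"
   "observable E a {1,2} = eone E" "observable E a {1..2} = eone E"
  by (auto simp: observable_def)

context ea begin

lemma obs_obj: assumes a: "a \<in> carrier E" shows "intR_obj E 2 (observable E a)"
  unfolding intR_obj_pw ea_morphism_def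
proof (intro conjI allI impI ballI)
  note c = compl[OF a]
  have vals: "\<And>X. X \<subseteq> {1,2} \<Longrightarrow> observable E a X \<in> carrier E"
  proof -
    fix X :: "nat set" assume "X \<subseteq> {1,2}"
    then show "observable E a X \<in> carrier E" using set12[OF \<open>X \<subseteq> {1,2}\<close>] c a zero_in one_in
      by (elim disjE) (simp_all add: observable_def)
  qed
  have e12: "{1..2::nat} = {1,2}" by auto
  fix X assume "X \<in> carrier (powerset_ea {1..2::nat})"
  then show "observable E a X \<in> carrier E" using vals e12 unfolding powerset_ea_def by simp
next
  show "observable E a (eone (powerset_ea {1..2::nat})) = eone E" unfolding powerset_ea_def using obs_vals by simp
next
  note c = compl[OF a]
  have e12: "{1..2::nat} = {1,2}" by auto
  have vals: "\<And>X. X \<subseteq> {1,2} \<Longrightarrow> observable E a X \<in> carrier E"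
  proof -
    fix X :: "nat set" assume "X \<subseteq> {1,2}"
    then show "observable E a X \<in> carrier E" using set12[OF \<open>X \<subseteq> {1,2}\<close>] c a zero_in one_in
      by (elim disjE) (simp_all add: observable_def)
  qed
  fix X Y assume "orth (powerset_ea {1..2::nat}) X Y"
  then have X: "X \<subseteq> {1,2}" and Y: "Y \<subseteq> {1,2}" and d: "X \<inter> Y = {}" unfolding powerset_ea_def e12 by auto
  have cases: "X = {} \<or> Y = {} \<or> (X = {1} \<and> Y = {2}) \<or> (X = {2} \<and> Y = {1})"
    using set12[OF X] set12[OF Y] d by (elim disjE) simp_all
  have goal: "orth E (observable E a X) (observable E a Y) \<and>
     observable E a (X \<union> Y) = eplus E (observable E a X) (observable E a Y)"
  proof -
    consider "X = {}" | "Y = {}" | "X = {1} \<and> Y = {2}" | "X = {2} \<and> Y = {1}" using cases by blast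
    then show ?thesis
    proof cases
      case 1
      have "observable E a X = ezero E" using 1 by (simp add: observable_def)
      then show ?thesis using zero_left[OF vals[OF Y]] 1 by simp
    next
      case 2
      have "observable E a Y = ezero E" using 2 by (simp add: observable_def)
      then show ?thesis using zero_right[OF vals[OF X]] 2 by simp
    next
      case 3
      have "observable E a X = a" "observable E a Y = ecompl E a" "observable E a (X \<union> Y) = eone E"
        using 3 by (simp_all add: observable_def)
      then show ?thesis using c by simp
    next
      case 4
      have "observable E a X = ecompl E a" "observable E a Y = a" "observable E a (X \<union> Y) = eone E"
        using 4 by (simp_all add: observable_def)
      moreover have "orth E (ecompl E a) a \<and> eplus E (ecompl E a) a = eone E" using c comm[of a "ecompl E a"] by simp
      ultimately show ?thesis by simp
    qed
  qed
  show "orth E (observable E a X) (observable E a Y)" using goal by simp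
  show "observable E a (eplus (powerset_ea {1..2::nat}) X Y) = eplus E (observable E a X) (observable E a Y)"
    using goal unfolding powerset_ea_def by simp
qed

end

context bis begin

lemma mor_fwd: assumes C': "effect_algebra C'" and f: "ea_morphism C C' f"
  and hh: "\<forall>a\<in>carrier A. \<forall>b\<in>carrier B. f (h a b) = h' a b"
  and gA: "intR_obj A n gA" and gB: "intR_obj B m gB" and X: "X \<subseteq> {1..n} \<times> {1..m}"
  shows "f (cocone_of_bimorphism C h n gA m gB X) = cocone_of_bimorphism C' h' n gA m gB X"
proof -
  let ?F = "\<lambda>(i,j). h (gA {i}) (gB {j})"
  have okG: "ok C ?F ({1..n} \<times> {1..m})" using rect[OF gA gB order_refl order_refl] by simp
  have okX: "ok C ?F X" using C.ok_subset[OF okG X] .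
  have gA': "ea_morphism (powerset_ea {1..n}) A gA" and gB': "ea_morphism (powerset_ea {1..m}) B gB"
    using gA gB intR_obj_pw by auto
  have "f (esum C ?F X) = esum C' (\<lambda>p. f (?F p)) X" using C.morph_esum[OF C' f okX] .
  also have "\<dots> = esum C' (\<lambda>(i,j). h' (gA {i}) (gB {j})) X"
  proof (rule esum_cong)
    fix p assume p: "p \<in> X"
    obtain i j where ij: "p = (i,j)" by force
    have i: "{i} \<subseteq> {1..n}" and j: "{j} \<subseteq> {1..m}" using p ij X by auto
    show "f (?F p) = (\<lambda>(i,j). h' (gA {i}) (gB {j})) p"
      using hh pw_carrier[OF gA' i] pw_carrier[OF gB' j] ij by simp
  qed
  finally show ?thesis unfolding cob_eq .
qed

end

lemma bool_hom_S: assumes S: "S \<subseteq> {1..n}"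
  shows "bool_hom 2 n (\<lambda>X. (if 1 \<in> X then S else {}) \<union> (if 2 \<in> X then {1..n} - S else {}))"
  unfolding bool_hom_def using S by auto

context ea begin

lemma ok_obj: assumes ok: "ok E e {1..n}" and one: "esum E e {1..n} = eone E"
  shows "intR_obj E n (esum E e)"
  unfolding intR_obj_pw ea_morphism_def
proof (intro conjI allI impI ballI)
  fix X assume "X \<in> carrier (powerset_ea {1..n})"
  then have "X \<subseteq> {1..n}" unfolding powerset_ea_def by simp
  then show "esum E e X \<in> carrier E" using ok_carrier ok_subset[OF ok] by blast
next
  show "esum E e (eone (powerset_ea {1..n})) = eone E" using one unfolding powerset_ea_def by simp
next
  fix X Y assume "orth (powerset_ea {1..n}) X Y"
  then have X: "X \<subseteq> {1..n}" and Y: "Y \<subseteq> {1..n}" and d: "X \<inter> Y = {}" unfolding powerset_ea_def by auto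
  have okXY: "ok E e (X \<union> Y)" using ok_subset[OF ok] X Y by (meson Un_least)
  have ee: "(X \<union> Y) - X = Y" using d by blast
  note a = add_split[OF okXY, of X, unfolded ee]
  show "orth E (esum E e X) (esum E e Y)" using a by simp
  show "esum E e (eplus (powerset_ea {1..n}) X Y) = eplus E (esum E e X) (esum E e Y)"
    using a unfolding powerset_ea_def by simp
qed

lemma obj3: assumes o: "orth E a1 a2"
  shows "\<exists>g. intR_obj E 3 g \<and> g {1} = a1 \<and> g {2} = a2 \<and> g {1,2} = eplus E a1 a2"
proof -
  define c where "c = eplus E a1 a2"
  have cc: "c \<in> carrier E" "a1 \<in> carrier E" "a2 \<in> carrier E" using orth_carrier[OF o] c_def by auto
  define e where "e = (\<lambda>i::nat. if i = 1 then a1 else if i = 2 then a2 else ecompl E c)"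
  have e1: "e 1 = a1" and e2: "e 2 = a2" and e3: "e 3 = ecompl E c" unfolding e_def by auto
  note k = compl[OF cc(1)]
  have ok1: "ok E e {1}" using ok_single[of e 1] e1 cc by simp
  have ok2: "ok E e {2}" using ok_single[of e 2] e2 cc by simp
  have ok3: "ok E e {3}" using ok_single[of e 3] e3 k by simp
  have s1: "esum E e {1} = a1" using esum_single'[of e 1] e1 cc by simp
  have s2: "esum E e {2} = a2" using esum_single'[of e 2] e2 cc by simp
  have s3: "esum E e {3} = ecompl E c" using esum_single'[of e 3] e3 k by simp
  have u12: "ok E e ({1} \<union> {2}) \<and> esum E e ({1} \<union> {2}) = c"
    using ok_union_eq[OF ok1 ok2] s1 s2 o c_def by simp
  then have u12': "ok E e {1,2}" "esum E e {1,2} = c" by (simp_all add: insert_commute)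
  have u: "ok E e ({1,2} \<union> {3}) \<and> esum E e ({1,2} \<union> {3}) = eone E"
    using ok_union_eq[OF u12'(1) ok3] u12' s3 k by simp
  have e123: "{1..3::nat} = {1,2} \<union> {3}" by auto
  have obj: "intR_obj E 3 (esum E e)" using ok_obj[of e 3] u unfolding e123 by simp
  show ?thesis using obj s1 s2 u12' c_def by blast
qed

lemma arrowS: assumes g: "intR_obj E n g" and S: "S \<subseteq> {1..n}"
  shows "intR_arrow E 2 (observable E (g S)) n g
     (\<lambda>X. (if 1 \<in> X then S else {}) \<union> (if 2 \<in> X then {1..n} - S else {}))"
  unfolding intR_arrow_def
proof (intro conjI allI impI)
  have g': "ea_morphism (powerset_ea {1..n}) E g" using g intR_obj_pw by auto
  have gs: "g S \<in> carrier E" using pw_carrier[OF g' S] .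
  show "intR_obj E 2 (observable E (g S))" using obs_obj[OF gs] .
  show "intR_obj E n g" using g .
  show "bool_hom 2 n (\<lambda>X. (if 1 \<in> X then S else {}) \<union> (if 2 \<in> X then {1..n} - S else {}))"
    using bool_hom_S[OF S] .
  fix X :: "nat set" assume "X \<subseteq> {1..2}"
  then have X: "X \<subseteq> {1,2}" by auto
  have z: "g {} = ezero E" using pw_zero[OF ea g'] .
  have c: "g ({1..n} - S) = ecompl E (g S)" using pw_compl[OF ea g' S] .
  have o: "g (S \<union> ({1..n} - S)) = eone E" using pw_one[OF g'] S by (simp add: Un_absorb1 Un_Diff_cancel)
  show "g ((if 1 \<in> X then S else {}) \<union> (if 2 \<in> X then {1..n} - S else {})) = observable E (g S) X"
    using set12[OF X]
  proof (elim disjE)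
    assume "X = {}" then show ?thesis using z by (simp add: observable_def)
  next
    assume "X = {1}" then show ?thesis by (simp add: observable_def)
  next
    assume "X = {2}" then show ?thesis using c by (simp add: observable_def)
  next
    assume "X = {1,2}" then show ?thesis using o by (simp add: observable_def)
  qed
qed

end

locale cos = A: ea A + B: ea B + C: ea C for A :: "'a effalg" and B :: "'b effalg" and C :: "'c effalg" +
  fixes v :: "('a,'b,'c) cocone_fam"
  assumes coc: "cocone A B C v"
begin

lemma v_morph: "intR_obj A n gA \<Longrightarrow> intR_obj B m gB \<Longrightarrow> ea_morphism (powerset_ea ({1..n} \<times> {1..m})) C (v n gA m gB)"
  using coc[unfolded cocone_def, THEN conjunct1] unfolding bool2_ea_def by blast

lemma v_compat: "intR_arrow A n gA n' gA' fA \<Longrightarrow> intR_arrow B m gB m' gB' fB \<Longrightarrow> X \<subseteq> {1..n} \<times> {1..m} \<Longrightarrow>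
   v n' gA' m' gB' (bool_coprod fA fB X) = v n gA m gB X"
  using coc[unfolded cocone_def, THEN conjunct2] by blast

abbreviation "hv \<equiv> bimorphism_of_cocone A B v"

lemma v_rect: assumes gA: "intR_obj A n gA" and gB: "intR_obj B m gB" and S: "S \<subseteq> {1..n}" and T: "T \<subseteq> {1..m}"
  shows "v n gA m gB (S \<times> T) = hv (gA S) (gB T)"
proof -
  note c = v_compat[OF A.arrowS[OF gA S] B.arrowS[OF gB T], of "{(1,1)}"]
  have "bool_coprod (\<lambda>X. (if 1 \<in> X then S else {}) \<union> (if 2 \<in> X then {1..n} - S else {}))
          (\<lambda>X. (if 1 \<in> X then T else {}) \<union> (if 2 \<in> X then {1..m} - T else {})) {(1,1)} = S \<times> T"
    unfolding bool_coprod_def by simp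
  then show ?thesis using c unfolding bimorphism_of_cocone_def by simp
qed

lemma v_eq: assumes gA: "intR_obj A n gA" and gB: "intR_obj B m gB" and X: "X \<subseteq> {1..n} \<times> {1..m}"
  shows "cocone_of_bimorphism C hv n gA m gB X = v n gA m gB X"
proof -
  note vm = v_morph[OF gA gB]
  have add: "\<forall>Z1 Z2. Z1 \<subseteq> {1..n} \<times> {1..m} \<and> Z2 \<subseteq> {1..n} \<times> {1..m} \<and> Z1 \<inter> Z2 = {} \<longrightarrow>
     v n gA m gB (Z1 \<union> Z2) = eplus C (v n gA m gB Z1) (v n gA m gB Z2)"
    using pw_add[OF vm] by blast
  have z: "v n gA m gB {} = ezero C" using pw_zero[OF C.ea vm] .
  have "v n gA m gB X = esum C (\<lambda>p. v n gA m gB {p}) X" by (rule additive_esum[OF _ add z X]) simp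
  also have "\<dots> = esum C (\<lambda>(i,j). hv (gA {i}) (gB {j})) X"
  proof (rule esum_cong)
    fix p assume p: "p \<in> X"
    obtain i j where ij: "p = (i,j)" by force
    have i: "{i} \<subseteq> {1..n}" and j: "{j} \<subseteq> {1..m}" using p ij X by auto
    have "v n gA m gB {p} = v n gA m gB ({i} \<times> {j})" using ij by simp
    also have "\<dots> = hv (gA {i}) (gB {j})" using v_rect[OF gA gB i j] .
    finally show "v n gA m gB {p} = (\<lambda>(i,j). hv (gA {i}) (gB {j})) p" using ij by simp
  qed
  finally show ?thesis unfolding cob_eq by simp
qed

lemma hv_bim: "bimorphism A B C hv"
  unfolding bimorphism_def
proof (intro conjI allI impI ballI)
  fix a b assume a: "a \<in> carrier A" and b: "b \<in> carrier B"
  note vm = v_morph[OF A.obs_obj[OF a] B.obs_obj[OF b]]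
  show "hv a b \<in> carrier C" unfolding bimorphism_of_cocone_def using pw_carrier[OF vm] by simp
next
  note oa = A.obs_obj[OF A.one_in] and ob = B.obs_obj[OF B.one_in]
  have "v 2 (observable A (eone A)) 2 (observable B (eone B)) ({1..2} \<times> {1..2}) = eone C"
    using pw_one[OF v_morph[OF oa ob]] .
  moreover have "observable A (eone A) {1..2} = eone A" "observable B (eone B) {1..2} = eone B"
    by (simp_all add: observable_def)
  ultimately show "hv (eone A) (eone B) = eone C" using v_rect[OF oa ob order_refl order_refl] by simp
next
  fix a1 a2 b assume "orth A a1 a2 \<and> b \<in> carrier B"
  then have o: "orth A a1 a2" and b: "b \<in> carrier B" by auto
  obtain g where g: "intR_obj A 3 g" "g {1} = a1" "g {2} = a2" "g {1,2} = eplus A a1 a2"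
    using A.obj3[OF o] by blast
  note ob = B.obs_obj[OF b]
  note vm = v_morph[OF g(1) ob]
  have T: "{1::nat} \<subseteq> {1..2}" by auto
  have r1: "v 3 g 2 (observable B b) ({1} \<times> {1}) = hv a1 b" using v_rect[OF g(1) ob _ T, of "{1}"] g by (simp add: observable_def)
  have r2: "v 3 g 2 (observable B b) ({2} \<times> {1}) = hv a2 b" using v_rect[OF g(1) ob _ T, of "{2}"] g by (simp add: observable_def)
  have r12: "v 3 g 2 (observable B b) ({1,2} \<times> {1}) = hv (eplus A a1 a2) b" using v_rect[OF g(1) ob _ T, of "{1,2}"] g by (simp add: observable_def)
  have e: "({1::nat} \<times> {1::nat}) \<union> ({2} \<times> {1}) = ({1,2} \<times> {1})" by auto
  have p: "orth C (v 3 g 2 (observable B b) ({1} \<times> {1})) (v 3 g 2 (observable B b) ({2} \<times> {1})) \<and>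
     v 3 g 2 (observable B b) (({1} \<times> {1}) \<union> ({2} \<times> {1})) = eplus C (v 3 g 2 (observable B b) ({1} \<times> {1})) (v 3 g 2 (observable B b) ({2} \<times> {1}))"
    by (rule pw_add[OF vm]) auto
  show "orth C (hv a1 b) (hv a2 b)" using p r1 r2 by simp
  show "hv (eplus A a1 a2) b = eplus C (hv a1 b) (hv a2 b)" using p[unfolded e] r1 r2 r12 by simp
next
  fix a b1 b2 assume "a \<in> carrier A \<and> orth B b1 b2"
  then have o: "orth B b1 b2" and a: "a \<in> carrier A" by auto
  obtain g where g: "intR_obj B 3 g" "g {1} = b1" "g {2} = b2" "g {1,2} = eplus B b1 b2"
    using B.obj3[OF o] by blast
  note oa = A.obs_obj[OF a]
  note vm = v_morph[OF oa g(1)]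
  have S: "{1::nat} \<subseteq> {1..2}" by auto
  have r1: "v 2 (observable A a) 3 g ({1} \<times> {1}) = hv a b1" using v_rect[OF oa g(1) S, of "{1}"] g by (simp add: observable_def)
  have r2: "v 2 (observable A a) 3 g ({1} \<times> {2}) = hv a b2" using v_rect[OF oa g(1) S, of "{2}"] g by (simp add: observable_def)
  have r12: "v 2 (observable A a) 3 g ({1} \<times> {1,2}) = hv a (eplus B b1 b2)" using v_rect[OF oa g(1) S, of "{1,2}"] g by (simp add: observable_def)
  have e: "({1::nat} \<times> {1::nat}) \<union> ({1} \<times> {2}) = ({1} \<times> {1,2})" by auto
  have p: "orth C (v 2 (observable A a) 3 g ({1} \<times> {1})) (v 2 (observable A a) 3 g ({1} \<times> {2})) \<and>
     v 2 (observable A a) 3 g (({1} \<times> {1}) \<union> ({1} \<times> {2})) = eplus C (v 2 (observable A a) 3 g ({1} \<times> {1})) (v 2 (observable A a) 3 g ({1} \<times> {2}))"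
    by (rule pw_add[OF vm]) auto
  show "orth C (hv a b1) (hv a b2)" using p r1 r2 by simp
  show "hv a (eplus B b1 b2) = eplus C (hv a b1) (hv a b2)" using p[unfolded e] r1 r2 r12 by simp
qed

end
theorem mainTheorem5:
  fixes A :: "'a effalg" and B :: "'b effalg"
  assumes "effect_algebra A" and "effect_algebra B"
  shows
    \<comment> \<open>on objects: for each apex C, C-valued bimorphisms \<leftrightarrow> cocones with apex C, mutually inverse\<close>
    "(\<forall>(C :: 'c effalg) h. effect_algebra C \<and> bimorphism A B C h \<longrightarrow>
        cocone A B C (cocone_of_bimorphism C h) \<and>
        (\<forall>a\<in>carrier A. \<forall>b\<in>carrier B.
           bimorphism_of_cocone A B (cocone_of_bimorphism C h) a b = h a b)) \<and>
     (\<forall>(C :: 'c effalg) v. effect_algebra C \<and> cocone A B C v \<longrightarrow>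
        bimorphism A B C (bimorphism_of_cocone A B v) \<and>
        (\<forall>n gA m gB X. intR_obj A n gA \<and> intR_obj B m gB \<and> X \<subseteq> {1..n} \<times> {1..m} \<longrightarrow>
           cocone_of_bimorphism C (bimorphism_of_cocone A B v) n gA m gB X = v n gA m gB X)) \<and>
     \<comment> \<open>on morphisms: the same EA map f is a morphism on both sides\<close>
     (\<forall>(C :: 'c effalg) (C' :: 'd effalg) h h' f.
        effect_algebra C \<and> effect_algebra C' \<and> bimorphism A B C h \<and> bimorphism A B C' h' \<and>
        ea_morphism C C' f \<longrightarrow>
        ((\<forall>a\<in>carrier A. \<forall>b\<in>carrier B. f (h a b) = h' a b) \<longleftrightarrow>
         (\<forall>n gA m gB X. intR_obj A n gA \<and> intR_obj B m gB \<and> X \<subseteq> {1..n} \<times> {1..m} \<longrightarrow>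
            f (cocone_of_bimorphism C h n gA m gB X) = cocone_of_bimorphism C' h' n gA m gB X))) \<and>
     (\<forall>(C :: 'c effalg) (C' :: 'd effalg) v v' f.
        effect_algebra C \<and> effect_algebra C' \<and> cocone A B C v \<and> cocone A B C' v' \<and>
        ea_morphism C C' f \<longrightarrow>
        ((\<forall>n gA m gB X. intR_obj A n gA \<and> intR_obj B m gB \<and> X \<subseteq> {1..n} \<times> {1..m} \<longrightarrow>
            f (v n gA m gB X) = v' n gA m gB X) \<longleftrightarrow>
         (\<forall>a\<in>carrier A. \<forall>b\<in>carrier B.
            f (bimorphism_of_cocone A B v a b) = bimorphism_of_cocone A B v' a b)))"
proof -
  have eaA: "ea A" using assms(1) by (rule ea.intro)
  have eaB: "ea B" using assms(2) by (rule ea.intro)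
  have bisI: "\<And>(C :: 'x effalg) h. effect_algebra C \<Longrightarrow> bimorphism A B C h \<Longrightarrow> bis A B C h"
    by (simp add: bis_def bis_axioms_def ea_def assms)
  have cosI: "\<And>(C :: 'x effalg) v. effect_algebra C \<Longrightarrow> cocone A B C v \<Longrightarrow> cos A B C v"
    by (simp add: cos_def cos_axioms_def ea_def assms)
  have s11: "{(1::nat,1::nat)} \<subseteq> {1..2::nat} \<times> {1..2::nat}" by auto
  have P1: "\<forall>(C :: 'c effalg) h. effect_algebra C \<and> bimorphism A B C h \<longrightarrow>
        cocone A B C (cocone_of_bimorphism C h) \<and>
        (\<forall>a\<in>carrier A. \<forall>b\<in>carrier B.
           bimorphism_of_cocone A B (cocone_of_bimorphism C h) a b = h a b)"
  proof (intro allI impI conjI ballI)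
    fix C :: "'c effalg" and h a b assume H: "effect_algebra C \<and> bimorphism A B C h"
    then have bi: "bis A B C h" using bisI by blast
    show "cocone A B C (cocone_of_bimorphism C h)" using bis.cocone_of[OF bi] .
    assume "a \<in> carrier A" "b \<in> carrier B"
    then show "bimorphism_of_cocone A B (cocone_of_bimorphism C h) a b = h a b" using bis.back_eq[OF bi] by blast
  qed
  have P2: "\<forall>(C :: 'c effalg) v. effect_algebra C \<and> cocone A B C v \<longrightarrow>
        bimorphism A B C (bimorphism_of_cocone A B v) \<and>
        (\<forall>n gA m gB X. intR_obj A n gA \<and> intR_obj B m gB \<and> X \<subseteq> {1..n} \<times> {1..m} \<longrightarrow>
           cocone_of_bimorphism C (bimorphism_of_cocone A B v) n gA m gB X = v n gA m gB X)"
  proof (intro allI impI conjI)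
    fix C :: "'c effalg" and v assume H: "effect_algebra C \<and> cocone A B C v"
    then have co: "cos A B C v" using cosI by blast
    show "bimorphism A B C (bimorphism_of_cocone A B v)" using cos.hv_bim[OF co] .
    fix n gA m gB X assume "intR_obj A n gA \<and> intR_obj B m gB \<and> X \<subseteq> {1..n} \<times> {1..m}"
    then show "cocone_of_bimorphism C (bimorphism_of_cocone A B v) n gA m gB X = v n gA m gB X"
      using cos.v_eq[OF co] by blast
  qed
  have P3g: "\<And>(C :: 'x effalg) (C' :: 'y effalg) h h' f.
        effect_algebra C \<and> effect_algebra C' \<and> bimorphism A B C h \<and> bimorphism A B C' h' \<and>
        ea_morphism C C' f \<Longrightarrow>
        ((\<forall>a\<in>carrier A. \<forall>b\<in>carrier B. f (h a b) = h' a b) \<longleftrightarrow>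
         (\<forall>n gA m gB X. intR_obj A n gA \<and> intR_obj B m gB \<and> X \<subseteq> {1..n} \<times> {1..m} \<longrightarrow>
            f (cocone_of_bimorphism C h n gA m gB X) = cocone_of_bimorphism C' h' n gA m gB X))"
  proof
    fix C :: "'x effalg" and C' :: "'y effalg" and h h' f
    assume H: "effect_algebra C \<and> effect_algebra C' \<and> bimorphism A B C h \<and> bimorphism A B C' h' \<and>
        ea_morphism C C' f"
    have bi: "bis A B C h" using bisI H by blast
    have bi': "bis A B C' h'" using bisI H by blast
    {
      assume hh: "\<forall>a\<in>carrier A. \<forall>b\<in>carrier B. f (h a b) = h' a b"
      show "\<forall>n gA m gB X. intR_obj A n gA \<and> intR_obj B m gB \<and> X \<subseteq> {1..n} \<times> {1..m} \<longrightarrow>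
            f (cocone_of_bimorphism C h n gA m gB X) = cocone_of_bimorphism C' h' n gA m gB X"
      proof (intro allI impI)
        fix n gA m gB X assume "intR_obj A n gA \<and> intR_obj B m gB \<and> X \<subseteq> {1..n} \<times> {1..m}"
        then show "f (cocone_of_bimorphism C h n gA m gB X) = cocone_of_bimorphism C' h' n gA m gB X"
          using bis.mor_fwd[OF bi, of C' f h' n gA m gB X] H hh by blast
      qed
    }
    {
      assume HH: "\<forall>n gA m gB X. intR_obj A n gA \<and> intR_obj B m gB \<and> X \<subseteq> {1..n} \<times> {1..m} \<longrightarrow>
            f (cocone_of_bimorphism C h n gA m gB X) = cocone_of_bimorphism C' h' n gA m gB X"
      show "\<forall>a\<in>carrier A. \<forall>b\<in>carrier B. f (h a b) = h' a b"
      proof (intro ballI)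
        fix a b assume a: "a \<in> carrier A" and b: "b \<in> carrier B"
        note oa = ea.obs_obj[OF eaA a] and ob = ea.obs_obj[OF eaB b]
        have "f (cocone_of_bimorphism C h 2 (observable A a) 2 (observable B b) {(1,1)}) =
           cocone_of_bimorphism C' h' 2 (observable A a) 2 (observable B b) {(1,1)}"
          using HH oa ob s11 by blast
        moreover have "cocone_of_bimorphism C h 2 (observable A a) 2 (observable B b) {(1,1)} = h a b"
          using bis.back_eq[OF bi a b] unfolding bimorphism_of_cocone_def .
        moreover have "cocone_of_bimorphism C' h' 2 (observable A a) 2 (observable B b) {(1,1)} = h' a b"
          using bis.back_eq[OF bi' a b] unfolding bimorphism_of_cocone_def .
        ultimately show "f (h a b) = h' a b" by simp
      qed
    }
  qed
  have P3: "\<forall>(C :: 'c effalg) (C' :: 'd effalg) h h' f.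
        effect_algebra C \<and> effect_algebra C' \<and> bimorphism A B C h \<and> bimorphism A B C' h' \<and>
        ea_morphism C C' f \<longrightarrow>
        ((\<forall>a\<in>carrier A. \<forall>b\<in>carrier B. f (h a b) = h' a b) \<longleftrightarrow>
         (\<forall>n gA m gB X. intR_obj A n gA \<and> intR_obj B m gB \<and> X \<subseteq> {1..n} \<times> {1..m} \<longrightarrow>
            f (cocone_of_bimorphism C h n gA m gB X) = cocone_of_bimorphism C' h' n gA m gB X))"
    using P3g by blast
  have P4: "\<forall>(C :: 'c effalg) (C' :: 'd effalg) v v' f.
        effect_algebra C \<and> effect_algebra C' \<and> cocone A B C v \<and> cocone A B C' v' \<and>
        ea_morphism C C' f \<longrightarrow>
        ((\<forall>n gA m gB X. intR_obj A n gA \<and> intR_obj B m gB \<and> X \<subseteq> {1..n} \<times> {1..m} \<longrightarrow>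
            f (v n gA m gB X) = v' n gA m gB X) \<longleftrightarrow>
         (\<forall>a\<in>carrier A. \<forall>b\<in>carrier B.
            f (bimorphism_of_cocone A B v a b) = bimorphism_of_cocone A B v' a b))"
  proof (intro allI impI, rule iffI)
    fix C :: "'c effalg" and C' :: "'d effalg" and v v' f
    assume H: "effect_algebra C \<and> effect_algebra C' \<and> cocone A B C v \<and> cocone A B C' v' \<and> ea_morphism C C' f"
    have co: "cos A B C v" using cosI H by blast
    have co': "cos A B C' v'" using cosI H by blast
    {
      assume HH: "\<forall>n gA m gB X. intR_obj A n gA \<and> intR_obj B m gB \<and> X \<subseteq> {1..n} \<times> {1..m} \<longrightarrow>
            f (v n gA m gB X) = v' n gA m gB X"
      show "\<forall>a\<in>carrier A. \<forall>b\<in>carrier B. f (bimorphism_of_cocone A B v a b) = bimorphism_of_cocone A B v' a b"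
      proof (intro ballI)
        fix a b assume a: "a \<in> carrier A" and b: "b \<in> carrier B"
        note oa = ea.obs_obj[OF eaA a] and ob = ea.obs_obj[OF eaB b]
        show "f (bimorphism_of_cocone A B v a b) = bimorphism_of_cocone A B v' a b"
          unfolding bimorphism_of_cocone_def using HH oa ob s11 by blast
      qed
    }
    {
      assume HH: "\<forall>a\<in>carrier A. \<forall>b\<in>carrier B. f (bimorphism_of_cocone A B v a b) = bimorphism_of_cocone A B v' a b"
      show "\<forall>n gA m gB X. intR_obj A n gA \<and> intR_obj B m gB \<and> X \<subseteq> {1..n} \<times> {1..m} \<longrightarrow>
            f (v n gA m gB X) = v' n gA m gB X"
      proof (intro allI impI)
        fix n gA m gB X assume O: "intR_obj A n gA \<and> intR_obj B m gB \<and> X \<subseteq> {1..n} \<times> {1..m}"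
        have bi: "bis A B C (bimorphism_of_cocone A B v)" using bisI H cos.hv_bim[OF co] by blast
        have e1: "cocone_of_bimorphism C (bimorphism_of_cocone A B v) n gA m gB X = v n gA m gB X"
          using cos.v_eq[OF co] O by blast
        have e2: "cocone_of_bimorphism C' (bimorphism_of_cocone A B v') n gA m gB X = v' n gA m gB X"
          using cos.v_eq[OF co'] O by blast
        have "f (cocone_of_bimorphism C (bimorphism_of_cocone A B v) n gA m gB X) =
              cocone_of_bimorphism C' (bimorphism_of_cocone A B v') n gA m gB X"
          using bis.mor_fwd[OF bi, of C' f "bimorphism_of_cocone A B v'" n gA m gB X] H HH O by blast
        then show "f (v n gA m gB X) = v' n gA m gB X" using e1 e2 by simp
      qed
    }
  qed
  from P1 P2 P3 P4 show ?thesis by (rule conjI[OF _ conjI[OF _ conjI]])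
qed

end
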